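(* Let $P$ be a finite type $\mathbb{N}$-graded upho poset with minimum element $\hat 0$, and suppose $P$ is a meet semilattice. Then $\mu(\hat 0,p)=0$ for all but finitely many $p\in P$; consequently $\chi_P(x)$ is a polynomial, and $F_P(x)=1/\chi_P(x)$ is the reciprocal of a polynomial. More precisely, $\chi_P(x)=\sum_{p\in P'}\mu(\hat0,p)x^{\rho(p)}$, where $P'$ is the finite subposet of $P$ consisting of all elements lying below some join (least upper bound) of a finite set of atoms of $P$, and $P'$ is a finite graded meet semilattice.
   Context: A poset $P$ is $\mathbb{N}$-graded if $P = P_0\sqcup P_1\sqcup P_2\sqcup\cdots$ (disjoint union) such that every maximal chain has the form $p_0\lessdot p_1\lessdot p_2\lessdot\cdots$ with $p_i\in P_i$ for all $i$. Its rank function $\rho\colon P\to\mathbb{N}$ is $\rho(p)=i$ for $p\in P_i$. $P$ has finite type if $\#P_i<\infty$ for all $i$. The rank generating function is $F_P(x)=\sum_{p\in P}x^{\rho(p)}$, and with $\mu$ the Möbius function of $P$, the characteristic generating function is $\chi_P(x)=\sum_{p\in P}\mu(\hat 0,p)x^{\rho(p)}$. $P$ is upper homogeneous (upho) if for every $p\in P$ the principal order filter $V_p=\{q\in P: q\ge p\}$ is isomorphic to $P$. Atoms are the elements covering $\hat 0$ (there are finitely many, by finite type). A meet semilattice is a poset in which every pair of elements has a greatest lower bound. *)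

theory Defs
  imports "HOL-Computational_Algebra.Polynomial_FPS"
begin

(* All posets are subsets P of a type 'a carrying the (partial) order of class order,
   with the induced order. *)

definition covers :: "'a::order set \<Rightarrow> 'a \<Rightarrow> 'a \<Rightarrow> bool" where
  "covers P x y \<longleftrightarrow> x \<in> P \<and> y \<in> P \<and> x < y \<and> \<not> (\<exists>z\<in>P. x < z \<and> z < y)"

definition maximal_chain :: "'a::order set \<Rightarrow> 'a set \<Rightarrow> bool" where
  "maximal_chain P C \<longleftrightarrow> C \<subseteq> P \<and> Complete_Partial_Order.chain (\<le>) C \<and>
     (\<forall>D. D \<subseteq> P \<and> Complete_Partial_Order.chain (\<le>) D \<and> C \<subseteq> D \<longrightarrow> D = C)"

definition graded :: "'a::order set \<Rightarrow> ('a \<Rightarrow> nat) \<Rightarrow> bool" where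
  "graded P rho \<longleftrightarrow>
     (\<forall>C. maximal_chain P C \<longrightarrow>
        (\<exists>(f::nat \<Rightarrow> 'a) (N::nat set). (N = UNIV \<or> (\<exists>n. N = {..<n})) \<and> C = f ` N \<and>
           (\<forall>i. Suc i \<in> N \<longrightarrow> covers P (f i) (f (Suc i))) \<and>
           (\<forall>i\<in>N. rho (f i) = i)))"

definition finite_type :: "'a set \<Rightarrow> ('a \<Rightarrow> nat) \<Rightarrow> bool" where
  "finite_type P rho \<longleftrightarrow> (\<forall>i. finite {p\<in>P. rho p = i})"

definition is_minimum :: "'a::order set \<Rightarrow> 'a \<Rightarrow> bool" where
  "is_minimum P z \<longleftrightarrow> z \<in> P \<and> (\<forall>p\<in>P. z \<le> p)"

definition upho :: "'a::order set \<Rightarrow> bool" where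
  "upho P \<longleftrightarrow> (\<forall>p\<in>P. \<exists>f. bij_betw f P {q\<in>P. p \<le> q} \<and>
                      (\<forall>x\<in>P. \<forall>y\<in>P. x \<le> y \<longleftrightarrow> f x \<le> f y))"

definition is_glb :: "'a::order set \<Rightarrow> 'a \<Rightarrow> 'a \<Rightarrow> 'a \<Rightarrow> bool" where
  "is_glb P x y m \<longleftrightarrow> m \<in> P \<and> m \<le> x \<and> m \<le> y \<and> (\<forall>w\<in>P. w \<le> x \<and> w \<le> y \<longrightarrow> w \<le> m)"

definition meet_semilattice :: "'a::order set \<Rightarrow> bool" where
  "meet_semilattice P \<longleftrightarrow> (\<forall>x\<in>P. \<forall>y\<in>P. \<exists>m. is_glb P x y m)"

definition is_lub :: "'a::order set \<Rightarrow> 'a set \<Rightarrow> 'a \<Rightarrow> bool" where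
  "is_lub P S j \<longleftrightarrow> j \<in> P \<and> (\<forall>s\<in>S. s \<le> j) \<and> (\<forall>w\<in>P. (\<forall>s\<in>S. s \<le> w) \<longrightarrow> j \<le> w)"

definition atoms :: "'a::order set \<Rightarrow> 'a \<Rightarrow> 'a set" where
  "atoms P z = {a. covers P z a}"

definition mobius_fun :: "'a::order set \<Rightarrow> ('a \<Rightarrow> 'a \<Rightarrow> int) \<Rightarrow> bool" where
  "mobius_fun P m \<longleftrightarrow>
     (\<forall>x y. m x y = (if x \<in> P \<and> y \<in> P then
                       (if x = y then 1
                        else if x < y then - (\<Sum>w\<in>{w\<in>P. x \<le> w \<and> w < y}. m x w)
                        else 0)
                     else 0))"

definition mobius :: "'a::order set \<Rightarrow> 'a \<Rightarrow> 'a \<Rightarrow> int" where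
  "mobius P = (THE m. mobius_fun P m)"

definition rank_gf :: "'a set \<Rightarrow> ('a \<Rightarrow> nat) \<Rightarrow> int fps" where
  "rank_gf P rho = Abs_fps (\<lambda>n. int (card {p\<in>P. rho p = n}))"

definition char_gf :: "'a::order set \<Rightarrow> ('a \<Rightarrow> nat) \<Rightarrow> 'a \<Rightarrow> int fps" where
  "char_gf P rho z = Abs_fps (\<lambda>n. \<Sum>p\<in>{p\<in>P. rho p = n}. mobius P z p)"

end

theory Submission
  imports Defs
begin


lemma down_nat:
  fixes N :: "nat set"
  assumes "\<And>i j. i \<in> N \<Longrightarrow> j < i \<Longrightarrow> j \<in> N"
  shows "N = UNIV \<or> (\<exists>n. N = {..<n})"
proof (cases "N = UNIV")
  case False
  then obtain k where "k \<notin> N" by auto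
  define n where "n = (LEAST k. k \<notin> N)"
  have n: "n \<notin> N" unfolding n_def by (rule LeastI, fact)
  have "N = {..<n}"
  proof
    show "N \<subseteq> {..<n}" using assms n by (metis lessThan_iff linorder_neqE_nat subsetI)
    show "{..<n} \<subseteq> N" unfolding n_def using not_less_Least by auto
  qed
  then show ?thesis by auto
qed auto

lemma alt_pow:
  assumes "finite A" "A \<noteq> {}"
  shows "(\<Sum>S\<in>Pow A. (-1::int) ^ card S) = 0"
proof -
  have e: "Pow A = {T. T \<subseteq> A \<and> {} \<subseteq> T}" by auto
  have "{} \<subset> A" using assms by auto
  from card_subsupersets_even_odd[OF assms(1) this]
  have "card {T. T \<subseteq> A \<and> {} \<subseteq> T \<and> even (card T)} = card {T. T \<subseteq> A \<and> {} \<subseteq> T \<and> odd (card T)}" .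
  then have "card {x. x \<in> Pow A \<and> even (card x)} = card {x. x \<in> Pow A \<and> odd (card x)}"
    by (simp add: Pow_def)
  then show ?thesis using sum_alternating_cancels[of "Pow A" card] assms by simp
qed

locale gp =
  fixes P :: "'a::order set" and rho :: "'a \<Rightarrow> nat" and z :: 'a
  assumes gr: "graded P rho" and ft: "finite_type P rho" and mn: "is_minimum P z"
begin

lemma zP: "z \<in> P" and zle: "p \<in> P \<Longrightarrow> z \<le> p"
  using mn unfolding is_minimum_def by auto

lemma ext_chain:
  assumes CP: "C \<subseteq> P" and Cc: "Complete_Partial_Order.chain (\<le>) C"
  shows "\<exists>M. maximal_chain P M \<and> C \<subseteq> M"
proof -
  define A where "A = {D. D \<subseteq> P \<and> Complete_Partial_Order.chain (\<le>) D \<and> C \<subseteq> D}"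
  have inA: "D \<in> A \<longleftrightarrow> D \<subseteq> P \<and> Complete_Partial_Order.chain (\<le>) D \<and> C \<subseteq> D" for D
    unfolding A_def by simp
  have "\<forall>Cs\<in>chains A. \<exists>U\<in>A. \<forall>X\<in>Cs. X \<subseteq> U"
  proof
    fix Cs assume Cs: "Cs \<in> chains A"
    have CsA: "Cs \<subseteq> A" and Csc: "\<And>X Y. X \<in> Cs \<Longrightarrow> Y \<in> Cs \<Longrightarrow> X \<subseteq> Y \<or> Y \<subseteq> X"
      using Cs unfolding chains_def chain_subset_def by auto
    let ?U = "C \<union> \<Union>Cs"
    have allA: "X \<in> A" if "X \<in> insert C Cs" for X
    proof (cases "X = C")
      case True then show ?thesis using CP Cc inA by auto
    next
      case False then have "X \<in> Cs" using that by auto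
      then show ?thesis using CsA by auto
    qed
    have U1: "?U \<subseteq> P"
    proof
      fix x assume "x \<in> ?U"
      then obtain X where "X \<in> insert C Cs" "x \<in> X" by auto
      then show "x \<in> P" using allA inA by blast
    qed
    have U2: "Complete_Partial_Order.chain (\<le>) ?U"
    proof (rule chainI)
      fix x y assume x: "x \<in> ?U" and y: "y \<in> ?U"
      obtain X where X: "X \<in> insert C Cs" "x \<in> X" using x by auto
      obtain Y where Y: "Y \<in> insert C Cs" "y \<in> Y" using y by auto
      have CX: "C \<subseteq> X" "C \<subseteq> Y" and chX: "Complete_Partial_Order.chain (\<le>) X"
        "Complete_Partial_Order.chain (\<le>) Y" using allA[OF X(1)] allA[OF Y(1)] inA by auto
      have "X \<subseteq> Y \<or> Y \<subseteq> X"
      proof (cases "X = C \<or> Y = C")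
        case True then show ?thesis using CX by auto
      next
        case False then have "X \<in> Cs" "Y \<in> Cs" using X Y by auto
        then show ?thesis by (rule Csc)
      qed
      then show "x \<le> y \<or> y \<le> x"
      proof
        assume "X \<subseteq> Y" then show ?thesis using chX(2) X(2) Y(2) by (auto dest: chainD)
      next
        assume "Y \<subseteq> X" then show ?thesis using chX(1) X(2) Y(2) by (auto dest: chainD)
      qed
    qed
    have "?U \<in> A" using U1 U2 inA by auto
    moreover have "\<forall>X\<in>Cs. X \<subseteq> ?U" by auto
    ultimately show "\<exists>U\<in>A. \<forall>X\<in>Cs. X \<subseteq> U" by (rule bexI[rotated])
  qed
  from Zorn_Lemma2[OF this] obtain M where M: "M \<in> A" and Mmax: "\<And>X. X \<in> A \<Longrightarrow> M \<subseteq> X \<Longrightarrow> X = M"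
    by blast
  have MA: "M \<subseteq> P" "Complete_Partial_Order.chain (\<le>) M" "C \<subseteq> M" using M inA by auto
  have "maximal_chain P M"
    unfolding maximal_chain_def
  proof (intro conjI allI impI)
    fix D assume D: "D \<subseteq> P \<and> Complete_Partial_Order.chain (\<le>) D \<and> M \<subseteq> D"
    then have "D \<in> A" using MA inA by auto
    then show "D = M" using Mmax D by auto
  qed (use MA in auto)
  then show ?thesis using MA by auto
qed

lemma fmono:
  assumes "N = UNIV \<or> (\<exists>n. N = {..<n})" "\<forall>i. Suc i \<in> N \<longrightarrow> covers P (f i) (f (Suc i))"
  shows "i < j \<Longrightarrow> j \<in> N \<Longrightarrow> f i < f j"
proof (induction j)
  case 0 then show ?case by simp
next
  case (Suc j)
  have c: "f j < f (Suc j)" using assms(2) Suc.prems(2) unfolding covers_def by blast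
  have jN: "j \<in> N" using assms(1) Suc.prems(2) by auto
  show ?case
  proof (cases "i = j")
    case True then show ?thesis using c by simp
  next
    case False then have "i < j" using Suc.prems(1) by simp
    then have "f i < f j" using Suc.IH jN by simp
    then show ?thesis using c by (rule order.strict_trans)
  qed
qed

lemma pair_chain:
  assumes "x \<in> P" "y \<in> P" "x \<le> y"
  obtains f N where "N = UNIV \<or> (\<exists>n. N = {..<n})"
    "\<forall>i. Suc i \<in> N \<longrightarrow> covers P (f i) (f (Suc i))"
    "\<forall>i\<in>N. rho (f i) = i" "f ` N \<subseteq> P"
    "rho x \<in> N" "rho y \<in> N" "f (rho x) = x" "f (rho y) = y"
proof -
  have c: "Complete_Partial_Order.chain (\<le>) {x, y}"
    using assms(3) unfolding Complete_Partial_Order.chain_def by auto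
  have s: "{x, y} \<subseteq> P" using assms(1,2) by simp
  obtain M where M: "maximal_chain P M" "{x,y} \<subseteq> M" using ext_chain[OF s c] by (elim exE conjE)
  have "\<exists>(f::nat \<Rightarrow> 'a) (N::nat set). (N = UNIV \<or> (\<exists>n. N = {..<n})) \<and> M = f ` N \<and>
           (\<forall>i. Suc i \<in> N \<longrightarrow> covers P (f i) (f (Suc i))) \<and>
           (\<forall>i\<in>N. rho (f i) = i)"
    using gr M(1) unfolding graded_def by (elim allE impE)
  then obtain f N where fN: "N = UNIV \<or> (\<exists>n. N = {..<n})" "M = f ` N"
    "\<forall>i. Suc i \<in> N \<longrightarrow> covers P (f i) (f (Suc i))" "\<forall>i\<in>N. rho (f i) = i"
    by (elim exE conjE)
  have MP: "M \<subseteq> P" using M(1) unfolding maximal_chain_def by simp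
  have "x \<in> f ` N" using M(2) fN(2) by simp
  then obtain i where i: "i \<in> N" "x = f i" by (elim imageE)
  have "y \<in> f ` N" using M(2) fN(2) by simp
  then obtain j where j: "j \<in> N" "y = f j" by (elim imageE)
  have ri: "rho x = i" using fN(4) i by simp
  have rj: "rho y = j" using fN(4) j by simp
  show ?thesis
  proof (rule that[OF fN(1) fN(3) fN(4)])
    show "f ` N \<subseteq> P" using MP fN(2) by simp
    show "rho x \<in> N" "rho y \<in> N" "f (rho x) = x" "f (rho y) = y" using ri rj i j by simp_all
  qed
qed

lemma rho_less: "x \<in> P \<Longrightarrow> y \<in> P \<Longrightarrow> x < y \<Longrightarrow> rho x < rho y"
proof -
  assume a: "x \<in> P" "y \<in> P" "x < y"
  have le: "x \<le> y" using a(3) by (rule less_imp_le)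
  obtain f N where fN: "N = UNIV \<or> (\<exists>n. N = {..<n})"
    "\<forall>i. Suc i \<in> N \<longrightarrow> covers P (f i) (f (Suc i))"
    "\<forall>i\<in>N. rho (f i) = i" "f ` N \<subseteq> P"
    "rho x \<in> N" "rho y \<in> N" "f (rho x) = x" "f (rho y) = y"
    by (rule pair_chain[OF a(1) a(2) le])
  show "rho x < rho y"
  proof (rule ccontr)
    assume "\<not> rho x < rho y"
    then consider "rho y < rho x" | "rho y = rho x" by linarith
    then show False
    proof cases
      case 1 then have "f (rho y) < f (rho x)" by (rule fmono[OF fN(1,2) _ fN(5)])
      then have "y < x" using fN(7,8) by simp
      then show False using a(3) by simp
    next
      case 2 then have "x = y" using fN(7,8) by metis
      then show False using a(3) by simp
    qed
  qed
qed

lemma rho_le: "x \<in> P \<Longrightarrow> y \<in> P \<Longrightarrow> x \<le> y \<Longrightarrow> rho x \<le> rho y"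
proof -
  assume a: "x \<in> P" "y \<in> P" "x \<le> y"
  show ?thesis
  proof (cases "x = y")
    case False then have "x < y" using a(3) by simp
    then show ?thesis using rho_less[OF a(1,2)] by simp
  qed simp
qed

lemma rho_z: "rho z = 0"
proof (rule ccontr)
  assume ne: "rho z \<noteq> 0"
  have le: "z \<le> z" by simp
  obtain f N where fN: "N = UNIV \<or> (\<exists>n. N = {..<n})"
    "\<forall>i. Suc i \<in> N \<longrightarrow> covers P (f i) (f (Suc i))"
    "\<forall>i\<in>N. rho (f i) = i" "f ` N \<subseteq> P"
    "rho z \<in> N" "rho z \<in> N" "f (rho z) = z" "f (rho z) = z"
    by (rule pair_chain[OF zP zP le])
  have "0 \<in> N" using fN(1,5) by auto
  have "0 < rho z" using ne by simp
  then have "f 0 < f (rho z)" by (rule fmono[OF fN(1,2) _ fN(5)])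
  then have "f 0 < z" using fN(7) by simp
  moreover have "f 0 \<in> P" using fN(4) \<open>0 \<in> N\<close> by auto
  ultimately show False using zle[of "f 0"] by simp
qed

lemma rho0: "q \<in> P \<Longrightarrow> rho q = 0 \<Longrightarrow> q = z"
proof -
  assume q: "q \<in> P" "rho q = 0"
  show "q = z"
  proof (rule ccontr)
    assume "q \<noteq> z"
    then have "z < q" using zle[OF q(1)] by simp
    then have "rho z < rho q" by (rule rho_less[OF zP q(1)])
    then show False using q(2) by simp
  qed
qed

lemma covers_rho:
  assumes "covers P a b" shows "rho b = Suc (rho a)"
proof -
  have a: "a \<in> P" "b \<in> P" "a < b" using assms unfolding covers_def by auto
  have le: "a \<le> b" using a(3) by simp
  obtain f N where fN: "N = UNIV \<or> (\<exists>n. N = {..<n})"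
    "\<forall>i. Suc i \<in> N \<longrightarrow> covers P (f i) (f (Suc i))"
    "\<forall>i\<in>N. rho (f i) = i" "f ` N \<subseteq> P"
    "rho a \<in> N" "rho b \<in> N" "f (rho a) = a" "f (rho b) = b"
    by (rule pair_chain[OF a(1) a(2) le])
  have lt: "rho a < rho b" by (rule rho_less[OF a])
  show ?thesis
  proof (rule ccontr)
    assume "rho b \<noteq> Suc (rho a)"
    then have l: "Suc (rho a) < rho b" using lt by linarith
    then have s: "Suc (rho a) \<in> N" using fN(1,6) by auto
    have "f (rho a) < f (Suc (rho a))" by (rule fmono[OF fN(1,2) _ s]) simp
    then have 1: "a < f (Suc (rho a))" using fN(7) by simp
    have "f (Suc (rho a)) < f (rho b)" by (rule fmono[OF fN(1,2) l fN(6)])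
    then have 2: "f (Suc (rho a)) < b" using fN(8) by simp
    have 3: "f (Suc (rho a)) \<in> P" using s fN(4) by auto
    show False using assms 1 2 3 unfolding covers_def by blast
  qed
qed

lemma pred_exists:
  assumes "q \<in> P" "z < q" shows "\<exists>q'. covers P q' q"
proof -
  have le: "z \<le> q" using assms(2) by simp
  obtain f N where fN: "N = UNIV \<or> (\<exists>n. N = {..<n})"
    "\<forall>i. Suc i \<in> N \<longrightarrow> covers P (f i) (f (Suc i))"
    "\<forall>i\<in>N. rho (f i) = i" "f ` N \<subseteq> P"
    "rho z \<in> N" "rho q \<in> N" "f (rho z) = z" "f (rho q) = q"
    by (rule pair_chain[OF zP assms(1) le])
  have "rho q > 0" using rho_less[OF zP assms(1,2)] rho_z by simp
  then obtain k where k: "rho q = Suc k" using gr0_conv_Suc by auto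
  then have "covers P (f k) (f (Suc k))" using fN(2,6) by simp
  then show ?thesis using fN(8) k by auto
qed

lemma atom_below:
  assumes "w \<in> P" "z < w" shows "\<exists>a\<in>atoms P z. a \<le> w"
proof -
  have le: "z \<le> w" using assms(2) by simp
  obtain f N where fN: "N = UNIV \<or> (\<exists>n. N = {..<n})"
    "\<forall>i. Suc i \<in> N \<longrightarrow> covers P (f i) (f (Suc i))"
    "\<forall>i\<in>N. rho (f i) = i" "f ` N \<subseteq> P"
    "rho z \<in> N" "rho w \<in> N" "f (rho z) = z" "f (rho w) = w"
    by (rule pair_chain[OF zP assms(1) le])
  have pos: "rho w > 0" using rho_less[OF zP assms(1,2)] rho_z by simp
  then have one: "Suc 0 \<in> N" using fN(1,6) by auto
  then have "covers P (f 0) (f (Suc 0))" using fN(2) by simp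
  moreover have "f 0 = z" using fN(7) rho_z by simp
  ultimately have c: "covers P z (f (Suc 0))" by simp
  have "f (Suc 0) \<le> w"
  proof (cases "rho w = Suc 0")
    case True then show ?thesis using fN(8) by (metis order_refl)
  next
    case False then have "Suc 0 < rho w" using pos by simp
    then have "f (Suc 0) < f (rho w)" by (rule fmono[OF fN(1,2) _ fN(6)])
    then show ?thesis using fN(8) by simp
  qed
  then show ?thesis using c unfolding atoms_def by auto
qed

lemma fin_rank_le: "finite {w\<in>P. rho w \<le> n}"
proof -
  have "{w\<in>P. rho w \<le> n} = (\<Union>i\<in>{..n}. {w\<in>P. rho w = i})" by auto
  then show ?thesis using ft unfolding finite_type_def by auto
qed

lemma fin_rank: "finite {w\<in>P. rho w = n}"
  using ft unfolding finite_type_def by auto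

lemma fin_below: "y \<in> P \<Longrightarrow> finite {w\<in>P. w \<le> y}"
  by (rule finite_subset[OF _ fin_rank_le[of "rho y"]]) (auto intro: rho_le)

lemma fin_below': "y \<in> P \<Longrightarrow> finite {w\<in>P. x \<le> w \<and> w < y}"
  by (rule finite_subset[OF _ fin_below[of y]]) auto

lemma atoms_sub: "atoms P z \<subseteq> {w\<in>P. rho w = 1}"
  using covers_rho rho_z unfolding atoms_def covers_def by fastforce

lemma atoms_fin: "finite (atoms P z)"
  using atoms_sub fin_rank finite_subset by blast

end


primrec muf :: "'a::order set \<Rightarrow> nat \<Rightarrow> 'a \<Rightarrow> 'a \<Rightarrow> int" where
  "muf P 0 x y = (if x \<in> P \<and> y \<in> P \<and> x = y then 1 else 0)"
| "muf P (Suc n) x y = (if x \<in> P \<and> y \<in> P then (if x = y then 1 else if x < y then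
      - (\<Sum>w\<in>{w\<in>P. x \<le> w \<and> w < y}. muf P n x w) else 0) else 0)"

context gp begin

lemma muf_stable: "rho y \<le> n \<Longrightarrow> rho y \<le> n' \<Longrightarrow> muf P n x y = muf P n' x y"
proof (induction n arbitrary: n' y)
  case 0
  show ?case
  proof (cases n')
    case (Suc k)
    have "\<not> (x \<in> P \<and> y \<in> P \<and> x < y)" using rho_less 0 by fastforce
    then show ?thesis using Suc by auto
  qed simp
next
  case (Suc n)
  show ?case
  proof (cases n')
    case 0
    have "\<not> (x \<in> P \<and> y \<in> P \<and> x < y)" using rho_less Suc.prems 0 by fastforce
    then show ?thesis using 0 by auto
  next
    case (Suc k)
    have "(\<Sum>w\<in>{w\<in>P. x \<le> w \<and> w < y}. muf P n x w) = (\<Sum>w\<in>{w\<in>P. x \<le> w \<and> w < y}. muf P k x w)"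
      if "y \<in> P"
    proof (rule sum.cong[OF refl])
      fix w assume "w \<in> {w\<in>P. x \<le> w \<and> w < y}"
      then have "rho w < rho y" using rho_less that by auto
      then show "muf P n x w = muf P k x w" using Suc.IH Suc.prems \<open>n' = Suc k\<close> by auto
    qed
    then show ?thesis using Suc by auto
  qed
qed

lemma mobius_fun_ex: "mobius_fun P (\<lambda>x y. muf P (rho y) x y)"
  unfolding mobius_fun_def
proof (intro allI)
  fix x y
  show "muf P (rho y) x y = (if x \<in> P \<and> y \<in> P then (if x = y then 1
        else if x < y then - (\<Sum>w\<in>{w\<in>P. x \<le> w \<and> w < y}. muf P (rho w) x w) else 0) else 0)"
  proof (cases "x \<in> P \<and> y \<in> P \<and> x < y")
    case True
    then have "rho y > 0" using rho_less by fastforce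
    then obtain k where k: "rho y = Suc k" using gr0_conv_Suc by auto
    have "(\<Sum>w\<in>{w\<in>P. x \<le> w \<and> w < y}. muf P k x w) = (\<Sum>w\<in>{w\<in>P. x \<le> w \<and> w < y}. muf P (rho w) x w)"
    proof (rule sum.cong[OF refl])
      fix w assume "w \<in> {w\<in>P. x \<le> w \<and> w < y}"
      then have "rho w < rho y" using rho_less True by auto
      then show "muf P k x w = muf P (rho w) x w" using muf_stable k by auto
    qed
    then show ?thesis using True k by auto
  next
    case False
    then show ?thesis by (cases "rho y") auto
  qed
qed

lemma mobius_fun_uniq:
  assumes "mobius_fun P m1" "mobius_fun P m2" shows "m1 = m2"
proof (intro ext)
  fix x y
  note h1 = assms(1)[unfolded mobius_fun_def, rule_format]
  note h2 = assms(2)[unfolded mobius_fun_def, rule_format]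
  show "m1 x y = m2 x y"
  proof (induction "rho y" arbitrary: y rule: less_induct)
    case less
    show ?case
    proof (cases "x \<in> P \<and> y \<in> P \<and> x < y")
      case True
      have "(\<Sum>w\<in>{w\<in>P. x \<le> w \<and> w < y}. m1 x w) = (\<Sum>w\<in>{w\<in>P. x \<le> w \<and> w < y}. m2 x w)"
      proof (rule sum.cong[OF refl])
        fix w assume "w \<in> {w\<in>P. x \<le> w \<and> w < y}"
        then have "rho w < rho y" using rho_less True by auto
        then show "m1 x w = m2 x w" using less by auto
      qed
      then show ?thesis using True h1[of x y] h2[of x y] by simp
    next
      case False
      then show ?thesis using h1[of x y] h2[of x y] by auto
    qed
  qed
qed

lemma mobius_fun: "mobius_fun P (mobius P)"
  unfolding mobius_def
  by (rule theI[where P="mobius_fun P", OF mobius_fun_ex]) (rule mobius_fun_uniq[symmetric], rule mobius_fun_ex)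

lemma mu_rec: "mobius P x y = (if x \<in> P \<and> y \<in> P then (if x = y then 1
        else if x < y then - (\<Sum>w\<in>{w\<in>P. x \<le> w \<and> w < y}. mobius P x w) else 0) else 0)"
  using mobius_fun[unfolded mobius_fun_def, rule_format, of x y] .

lemma mu_P: "mobius P z p \<noteq> 0 \<Longrightarrow> p \<in> P"
  using mu_rec[of z p] by (auto split: if_splits)

lemma mu_sum:
  assumes "q \<in> P"
  shows "(\<Sum>p\<in>{p\<in>P. p \<le> q}. mobius P z p) = (if q = z then 1 else 0)"
proof (cases "q = z")
  case True
  then have "{p\<in>P. p \<le> q} = {z}" using zle zP by fastforce
  then show ?thesis using True mu_rec[of z z] zP by simp
next
  case False
  then have lt: "z < q" using zle[OF assms] by (auto simp: order_less_le)
  have e: "{p\<in>P. p \<le> q} = insert q {w\<in>P. z \<le> w \<and> w < q}" using assms zle by auto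
  have "(\<Sum>p\<in>{p\<in>P. p \<le> q}. mobius P z p) = mobius P z q + (\<Sum>w\<in>{w\<in>P. z \<le> w \<and> w < q}. mobius P z w)"
    unfolding e by (rule sum.insert) (use fin_below' assms in auto)
  also have "\<dots> = 0" using mu_rec[of z q] lt zP assms by simp
  finally show ?thesis using False by simp
qed

end


locale gpm = gp +
  assumes ms: "meet_semilattice P"
begin

abbreviation "At \<equiv> atoms P z"

definition R :: "'a \<Rightarrow> int" where
  "R w = (\<Sum>S\<in>{S\<in>Pow At. is_lub P S w}. (-1) ^ card S)"

lemma At_P: "a \<in> At \<Longrightarrow> a \<in> P" and At_gt: "a \<in> At \<Longrightarrow> z < a"
  unfolding atoms_def covers_def by auto

lemma lub_unique: "is_lub P S j \<Longrightarrow> is_lub P S j' \<Longrightarrow> j = j'"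
  unfolding is_lub_def by (meson order.antisym)

lemma lub_exists:
  assumes w: "w \<in> P" and S: "S \<subseteq> {a\<in>At. a \<le> w}"
  shows "\<exists>j. is_lub P S j \<and> j \<le> w"
proof -
  define U where "U = {u\<in>P. u \<le> w \<and> (\<forall>s\<in>S. s \<le> u)}"
  have inU: "u \<in> U \<longleftrightarrow> u \<in> P \<and> u \<le> w \<and> (\<forall>s\<in>S. s \<le> u)" for u unfolding U_def by simp
  have SP: "s \<in> P" if "s \<in> S" for s using S that At_P by auto
  have fU: "finite U" unfolding U_def by (rule finite_subset[OF _ fin_below[OF w]]) auto
  have "w \<in> U" unfolding inU using w S by auto
  then have "U \<noteq> {}" by auto
  then obtain j where j: "j \<in> U" and jmin: "\<And>b. b \<in> U \<Longrightarrow> b \<le> j \<Longrightarrow> j = b"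
    using finite_has_minimal[OF fU] by metis
  have jU: "j \<in> P" "j \<le> w" "\<forall>s\<in>S. s \<le> j" using j unfolding inU by auto
  have meetU: "j \<le> u" if u: "u \<in> P" "\<forall>s\<in>S. s \<le> u" "u \<le> w" for u
  proof -
    obtain m where m: "is_glb P u j m" using ms u(1) jU(1) unfolding meet_semilattice_def by blast
    have m1: "m \<in> P" "m \<le> u" "m \<le> j" using m unfolding is_glb_def by auto
    have m2: "\<forall>v\<in>P. v \<le> u \<and> v \<le> j \<longrightarrow> v \<le> m" using m unfolding is_glb_def by auto
    have "m \<le> w" using m1(3) jU(2) by (rule order.trans)
    moreover have "\<forall>s\<in>S. s \<le> m"
    proof
      fix s assume "s \<in> S"
      then show "s \<le> m" using m2 SP u(2) jU(3) by blast
    qed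
    ultimately have "m \<in> U" unfolding inU using m1 by simp
    then have "j = m" using jmin m1(3) by simp
    then show ?thesis using m1(2) by simp
  qed
  have "is_lub P S j" unfolding is_lub_def
  proof (intro conjI ballI impI)
    show "j \<in> P" by (rule jU(1))
    show "s \<le> j" if "s \<in> S" for s using jU(3) that by blast
    fix u assume u: "u \<in> P" "\<forall>s\<in>S. s \<le> u"
    obtain m where m: "is_glb P u w m" using ms u(1) w unfolding meet_semilattice_def by blast
    have m1: "m \<in> P" "m \<le> u" "m \<le> w" using m unfolding is_glb_def by auto
    have m2: "\<forall>v\<in>P. v \<le> u \<and> v \<le> w \<longrightarrow> v \<le> m" using m unfolding is_glb_def by auto
    have "\<forall>s\<in>S. s \<le> m"
    proof
      fix s assume "s \<in> S"
      then show "s \<le> m" using m2 SP u(2) S by blast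
    qed
    then have "j \<le> m" using meetU m1 by simp
    then show "j \<le> u" using m1(2) by (rule order.trans)
  qed
  then show ?thesis using jU(2) by blast
qed

lemma sum_R:
  assumes w: "w \<in> P"
  shows "(\<Sum>v\<in>{v\<in>P. v \<le> w}. R v) = (\<Sum>S\<in>Pow {a\<in>At. a \<le> w}. (-1::int) ^ card S)"
proof -
  have "(\<Sum>v\<in>{v\<in>P. v \<le> w}. R v) = (\<Sum>S\<in>Pow At. \<Sum>v\<in>{v\<in>{v\<in>P. v \<le> w}. is_lub P S v}. (-1::int) ^ card S)"
    unfolding R_def by (rule sum.swap_restrict) (use fin_below[OF w] atoms_fin in auto)
  also have "\<dots> = (\<Sum>S\<in>Pow At. if S \<subseteq> {a\<in>At. a \<le> w} then (-1::int) ^ card S else 0)"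
  proof (rule sum.cong[OF refl])
    fix S assume "S \<in> Pow At"
    show "(\<Sum>v\<in>{v\<in>{v\<in>P. v \<le> w}. is_lub P S v}. (-1::int) ^ card S)
        = (if S \<subseteq> {a\<in>At. a \<le> w} then (-1::int) ^ card S else 0)"
    proof (cases "S \<subseteq> {a\<in>At. a \<le> w}")
      case True
      then obtain j where j: "is_lub P S j" "j \<le> w" using lub_exists w by blast
      have E: "{v\<in>{v\<in>P. v \<le> w}. is_lub P S v} = {j}"
        using j lub_unique unfolding is_lub_def by blast
      show ?thesis unfolding E using True by simp
    next
      case False
      have E: "{v\<in>{v\<in>P. v \<le> w}. is_lub P S v} = {}"
        using False \<open>S \<in> Pow At\<close> unfolding is_lub_def by (auto intro: order.trans)
      show ?thesis unfolding E using False by simp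
    qed
  qed
  also have "\<dots> = (\<Sum>S\<in>{S\<in>Pow At. S \<subseteq> {a\<in>At. a \<le> w}}. (-1::int) ^ card S)"
    by (rule sum.inter_filter[symmetric]) (use atoms_fin in auto)
  also have "{S\<in>Pow At. S \<subseteq> {a\<in>At. a \<le> w}} = Pow {a\<in>At. a \<le> w}" by auto
  finally show ?thesis .
qed

lemma mu_R: "w \<in> P \<Longrightarrow> mobius P z w = R w"
proof (induction "rho w" arbitrary: w rule: less_induct)
  case less
  show ?case
  proof (cases "w = z")
    case True
    have "{S\<in>Pow At. is_lub P S z} = {{}}"
    proof -
      have "is_lub P {} z" using zP zle unfolding is_lub_def by auto
      moreover have "S = {}" if "S \<in> Pow At" "is_lub P S z" for S
        using that At_gt unfolding is_lub_def by (meson PowD leD subsetD equals0I)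
      ultimately show ?thesis by auto
    qed
    then show ?thesis using True mu_rec[of z z] zP unfolding R_def by simp
  next
    case False
    then have lt: "z < w" using zle[OF less.prems] by (auto simp: order_less_le)
    have e: "{p\<in>P. p \<le> w} = insert w {v\<in>P. z \<le> v \<and> v < w}" using less.prems zle by auto
    have "{a\<in>At. a \<le> w} \<noteq> {}" using atom_below[OF less.prems lt] by auto
    then have "(\<Sum>v\<in>{v\<in>P. v \<le> w}. R v) = 0"
      using sum_R[OF less.prems] alt_pow[of "{a\<in>At. a \<le> w}"] atoms_fin by auto
    moreover have "(\<Sum>v\<in>{v\<in>P. v \<le> w}. R v) = R w + (\<Sum>v\<in>{v\<in>P. z \<le> v \<and> v < w}. R v)"
      unfolding e by (rule sum.insert) (use fin_below' less.prems in auto)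
    moreover have "(\<Sum>v\<in>{v\<in>P. z \<le> v \<and> v < w}. R v) = (\<Sum>v\<in>{v\<in>P. z \<le> v \<and> v < w}. mobius P z v)"
      by (rule sum.cong[OF refl]) (use less rho_less in auto)
    ultimately show ?thesis using mu_rec[of z w] lt zP less.prems by simp
  qed
qed

lemma mu_nz:
  assumes "mobius P z p \<noteq> 0"
  shows "\<exists>S. S \<subseteq> At \<and> finite S \<and> is_lub P S p"
proof -
  have p: "p \<in> P" using mu_P assms .
  then have "R p \<noteq> 0" using mu_R assms by simp
  then have "{S\<in>Pow At. is_lub P S p} \<noteq> {}" unfolding R_def by (metis sum.empty)
  then show ?thesis using atoms_fin finite_subset by blast
qed

end


context gpm begin

definition "P' = {q\<in>P. \<exists>S j. S \<subseteq> atoms P z \<and> finite S \<and> is_lub P S j \<and> q \<le> j}"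

lemma P'_sub: "P' \<subseteq> P" unfolding P'_def by auto

lemma P'_down: "q \<in> P' \<Longrightarrow> x \<in> P \<Longrightarrow> x \<le> q \<Longrightarrow> x \<in> P'"
  unfolding P'_def by (auto intro: order.trans)

lemma P'_fin: "finite P'"
proof -
  define L where "L = (\<lambda>S. THE j. is_lub P S j)"
  have L: "L S = j" if "is_lub P S j" for S j
    unfolding L_def using that lub_unique by blast
  define J where "J = L ` {S\<in>Pow At. \<exists>j. is_lub P S j}"
  have fJ: "finite J" unfolding J_def using atoms_fin by simp
  have JP: "j \<in> P" if "j \<in> J" for j
  proof -
    obtain S where S: "S \<in> {S\<in>Pow At. \<exists>j. is_lub P S j}" "j = L S" using \<open>j \<in> J\<close> unfolding J_def by (elim imageE)
    then obtain j' where j': "is_lub P S j'" by blast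
    then have "j = j'" using L S(2) by simp
    then show ?thesis using j' unfolding is_lub_def by simp
  qed
  have "P' \<subseteq> (\<Union>j\<in>J. {q\<in>P. q \<le> j})"
  proof
    fix q assume "q \<in> P'"
    then obtain S j where Sj: "q \<in> P" "S \<subseteq> At" "is_lub P S j" "q \<le> j" unfolding P'_def by blast
    have "S \<in> {S\<in>Pow At. \<exists>j. is_lub P S j}" using Sj by blast
    then have "L S \<in> J" unfolding J_def by (rule imageI)
    then have "j \<in> J" using L[OF Sj(3)] by simp
    then show "q \<in> (\<Union>j\<in>J. {q\<in>P. q \<le> j})" using Sj by blast
  qed
  moreover have "finite (\<Union>j\<in>J. {q\<in>P. q \<le> j})"
  proof (rule finite_UN_I[OF fJ])
    fix j assume "j \<in> J"
    then show "finite {q\<in>P. q \<le> j}" using fin_below JP by blast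
  qed
  ultimately show ?thesis using finite_subset by blast
qed

lemma P'_meet: "meet_semilattice P'"
  unfolding meet_semilattice_def
proof (intro ballI)
  fix x y assume "x \<in> P'" "y \<in> P'"
  then obtain m where m: "is_glb P x y m" using ms P'_sub unfolding meet_semilattice_def by blast
  then have "m \<in> P'" using P'_down \<open>x \<in> P'\<close> unfolding is_glb_def by auto
  then show "\<exists>m. is_glb P' x y m" using m P'_sub unfolding is_glb_def by blast
qed

lemma P'_graded: "graded P' rho"
  unfolding graded_def
proof (intro allI impI)
  fix C assume C: "maximal_chain P' C"
  have CP': "C \<subseteq> P'" and Cc: "Complete_Partial_Order.chain (\<le>) C"
    and Cmax: "\<And>D. D \<subseteq> P' \<Longrightarrow> Complete_Partial_Order.chain (\<le>) D \<Longrightarrow> C \<subseteq> D \<Longrightarrow> D = C"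
    using C unfolding maximal_chain_def by blast+
  have CP: "C \<subseteq> P" using CP' P'_sub by (rule order.trans)
  obtain M where M: "maximal_chain P M" "C \<subseteq> M" using ext_chain[OF CP Cc] by (elim exE conjE)
  have "\<exists>(f::nat \<Rightarrow> 'a) (N::nat set). (N = UNIV \<or> (\<exists>n. N = {..<n})) \<and> M = f ` N \<and>
           (\<forall>i. Suc i \<in> N \<longrightarrow> covers P (f i) (f (Suc i))) \<and>
           (\<forall>i\<in>N. rho (f i) = i)"
    using gr M(1) unfolding graded_def by (elim allE impE)
  then obtain f N where fN: "N = UNIV \<or> (\<exists>n. N = {..<n})" "M = f ` N"
    "\<forall>i. Suc i \<in> N \<longrightarrow> covers P (f i) (f (Suc i))" "\<forall>i\<in>N. rho (f i) = i"
    by (elim exE conjE)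
  have MP: "M \<subseteq> P" and Mc: "Complete_Partial_Order.chain (\<le>) M"
    using M(1) unfolding maximal_chain_def by blast+
  have c2: "Complete_Partial_Order.chain (\<le>) (M \<inter> P')"
    using Mc by (rule chain_subset) simp
  have "M \<inter> P' = C" by (rule Cmax) (use c2 M(2) CP' in auto)
  then have CM: "C = M \<inter> P'" by simp
  define N' where "N' = {i\<in>N. f i \<in> P'}"
  have "C = f ` N'" unfolding CM N'_def fN(2) by auto
  moreover have dn: "N' = UNIV \<or> (\<exists>n. N' = {..<n})"
  proof (rule down_nat)
    fix i j assume i: "i \<in> N'" and ji: "j < i"
    have iN: "i \<in> N" "f i \<in> P'" using i unfolding N'_def by auto
    have jN: "j \<in> N" using fN(1) iN(1) ji by auto
    have "f j < f i" by (rule fmono[OF fN(1) fN(3) ji iN(1)])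
    moreover have "f j \<in> P" using MP fN(2) jN by auto
    ultimately have "f j \<in> P'" using P'_down[OF iN(2)] by simp
    then show "j \<in> N'" using jN unfolding N'_def by simp
  qed
  moreover have "\<forall>i. Suc i \<in> N' \<longrightarrow> covers P' (f i) (f (Suc i))"
  proof (intro allI impI)
    fix i assume si: "Suc i \<in> N'"
    then have "i \<in> N'" using dn by auto
    then have a: "f i \<in> P'" "f (Suc i) \<in> P'" using si unfolding N'_def by auto
    have "Suc i \<in> N" using si unfolding N'_def by simp
    then have "covers P (f i) (f (Suc i))" using fN(3) by simp
    then show "covers P' (f i) (f (Suc i))"
      using a P'_sub unfolding covers_def by blast
  qed
  moreover have "\<forall>i\<in>N'. rho (f i) = i" using fN(4) unfolding N'_def by simp
  ultimately show "\<exists>(f::nat \<Rightarrow> 'a) (N::nat set). (N = UNIV \<or> (\<exists>n. N = {..<n})) \<and> C = f ` N \<and>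
           (\<forall>i. Suc i \<in> N \<longrightarrow> covers P' (f i) (f (Suc i))) \<and> (\<forall>i\<in>N. rho (f i) = i)"
    by blast
qed

lemma mu_fin: "finite {p\<in>P. mobius P z p \<noteq> 0}"
proof -
  have "{p\<in>P. mobius P z p \<noteq> 0} \<subseteq> P'"
    using mu_nz unfolding P'_def by blast
  then show ?thesis using P'_fin finite_subset by blast
qed

lemma char_poly: "char_gf P rho z = fps_of_poly (\<Sum>p\<in>P'. monom (mobius P z p) (rho p))"
proof (rule fps_ext)
  fix n
  have "fps_nth (fps_of_poly (\<Sum>p\<in>P'. monom (mobius P z p) (rho p))) n = (\<Sum>p\<in>P'. if rho p = n then mobius P z p else 0)"
    by (simp add: coeff_sum)
  also have "\<dots> = (\<Sum>p\<in>{p\<in>P'. rho p = n}. mobius P z p)"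
    by (rule sum.inter_filter[symmetric, OF P'_fin])
  also have "\<dots> = (\<Sum>p\<in>{p\<in>P. rho p = n}. mobius P z p)"
  proof (rule sum.mono_neutral_left[OF fin_rank])
    show "{p \<in> P'. rho p = n} \<subseteq> {p \<in> P. rho p = n}" using P'_sub by auto
    show "\<forall>i\<in>{p \<in> P. rho p = n} - {p \<in> P'. rho p = n}. mobius P z i = 0"
      using mu_nz unfolding P'_def by blast
  qed
  finally show "fps_nth (char_gf P rho z) n = fps_nth (fps_of_poly (\<Sum>p\<in>P'. monom (mobius P z p) (rho p))) n"
    unfolding char_gf_def by simp
qed

end


context gp begin

lemma rank_shift:
  assumes p: "p \<in> P" and bij: "bij_betw f P {q\<in>P. p \<le> q}"
    and iso: "\<forall>x\<in>P. \<forall>y\<in>P. x \<le> y \<longleftrightarrow> f x \<le> f y"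
  shows "q \<in> P \<Longrightarrow> rho (f q) = rho p + rho q"
proof (induction "rho q" arbitrary: q rule: less_induct)
  case less
  have img: "f ` P = {q\<in>P. p \<le> q}" using bij unfolding bij_betw_def by simp
  have fP: "f x \<in> P" "p \<le> f x" if "x \<in> P" for x
  proof -
    have "f x \<in> f ` P" using that by (rule imageI)
    then show "f x \<in> P" "p \<le> f x" unfolding img by simp_all
  qed
  have isoE: "x \<le> y \<longleftrightarrow> f x \<le> f y" if "x \<in> P" "y \<in> P" for x y using iso that by blast
  have preim: "\<exists>u\<in>P. w = f u" if "w \<in> P" "p \<le> w" for w
  proof -
    have "w \<in> f ` P" unfolding img using that by simp
    then show ?thesis by blast
  qed
  show ?case
  proof (cases "q = z")
    case True
    obtain u where u: "u \<in> P" "p = f u" using preim[OF p order_refl] by blast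
    have "f z \<le> f u" using isoE[OF zP u(1)] zle[OF u(1)] by simp
    then have "f z \<le> p" using u(2) by simp
    then have "f z = p" using fP(2)[OF zP] by simp
    then show ?thesis using True rho_z by simp
  next
    case False
    have "z \<le> q" by (rule zle[OF less.prems])
    then have "z < q" using False by (auto simp: order_less_le)
    then obtain q' where c: "covers P q' q" using pred_exists less.prems by blast
    have q': "q' \<in> P" "q' < q" using c unfolding covers_def by auto
    have r: "rho q = Suc (rho q')" using covers_rho c .
    then have IH: "rho (f q') = rho p + rho q'" using less.hyps[of q'] q'(1) by simp
    have fq': "f q' \<in> P" "p \<le> f q'" using fP q'(1) by auto
    have fq: "f q \<in> P" using fP less.prems by auto
    have "covers P (f q') (f q)"
      unfolding covers_def
    proof (intro conjI)
      show "f q' \<in> P" "f q \<in> P" using fq' fq by auto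
      have le1: "f q' \<le> f q" using isoE[OF q'(1) less.prems] q'(2) by (simp add: less_imp_le)
      have nle: "\<not> f q \<le> f q'" using isoE[OF less.prems q'(1)] q'(2) by (simp add: less_le_not_le)
      show "f q' < f q" using le1 nle by (simp add: less_le_not_le)
      show "\<not> (\<exists>w\<in>P. f q' < w \<and> w < f q)"
      proof
        assume "\<exists>w\<in>P. f q' < w \<and> w < f q"
        then obtain w where w: "w \<in> P" "f q' < w" "w < f q" by blast
        then have "p \<le> w" using fq'(2) by simp
        then obtain u where u: "u \<in> P" "w = f u" using preim w(1) by blast
        have "q' < u"
          using isoE[OF q'(1) u(1)] isoE[OF u(1) q'(1)] w(2) u(2) by (simp add: less_le_not_le)
        moreover have "u < q"
          using isoE[OF u(1) less.prems] isoE[OF less.prems u(1)] w(3) u(2) by (simp add: less_le_not_le)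
        ultimately show False using c u(1) unfolding covers_def by blast
      qed
    qed
    then have "rho (f q) = Suc (rho (f q'))" by (rule covers_rho)
    then show ?thesis using IH r by simp
  qed
qed

lemma card_shift:
  assumes up: "upho P" and p: "p \<in> P"
  shows "card {q\<in>P. rho q = k} = card {q\<in>P. p \<le> q \<and> rho q = rho p + k}"
proof -
  obtain f where bij: "bij_betw f P {q\<in>P. p \<le> q}" and iso: "\<forall>x\<in>P. \<forall>y\<in>P. x \<le> y \<longleftrightarrow> f x \<le> f y"
    using up[unfolded upho_def, rule_format, OF p] by (elim exE conjE)
  have img: "f ` P = {q\<in>P. p \<le> q}" using bij unfolding bij_betw_def by simp
  have inj: "inj_on f P" using bij unfolding bij_betw_def by simp
  have "bij_betw f {q\<in>P. rho q = k} {q\<in>P. p \<le> q \<and> rho q = rho p + k}"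
    unfolding bij_betw_def
  proof
    show "inj_on f {q\<in>P. rho q = k}" by (rule inj_on_subset[OF inj]) blast
    show "f ` {q\<in>P. rho q = k} = {q\<in>P. p \<le> q \<and> rho q = rho p + k}"
    proof
      show "f ` {q\<in>P. rho q = k} \<subseteq> {q\<in>P. p \<le> q \<and> rho q = rho p + k}"
      proof
        fix x assume "x \<in> f ` {q\<in>P. rho q = k}"
        then obtain u where u: "u \<in> P" "rho u = k" "x = f u" by blast
        have "f u \<in> f ` P" using u(1) by (rule imageI)
        then have "f u \<in> P" "p \<le> f u" unfolding img by simp_all
        moreover have "rho (f u) = rho p + k" using rank_shift[OF p bij iso u(1)] u(2) by simp
        ultimately show "x \<in> {q\<in>P. p \<le> q \<and> rho q = rho p + k}" using u(3) by simp
      qed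
      show "{q\<in>P. p \<le> q \<and> rho q = rho p + k} \<subseteq> f ` {q\<in>P. rho q = k}"
      proof
        fix q assume q: "q \<in> {q\<in>P. p \<le> q \<and> rho q = rho p + k}"
        then have "q \<in> f ` P" unfolding img by simp
        then obtain u where u: "u \<in> P" "q = f u" by blast
        then have "rho u = k" using rank_shift[OF p bij iso u(1)] q by simp
        then show "q \<in> f ` {q\<in>P. rho q = k}" using u by blast
      qed
    qed
  qed
  then show ?thesis by (rule bij_betw_same_card)
qed

lemma prod_one:
  assumes up: "upho P"
  shows "rank_gf P rho * char_gf P rho z = 1"
proof (rule fps_ext)
  fix n
  define Pn where "Pn = {q\<in>P. rho q = n}"
  define Q where "Q = {p\<in>P. rho p \<le> n}"
  have fQ: "finite Q" unfolding Q_def by (rule fin_rank_le)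
  have fPn: "finite Pn" unfolding Pn_def by (rule fin_rank)
  have "fps_nth (rank_gf P rho * char_gf P rho z) n = fps_nth (char_gf P rho z * rank_gf P rho) n"
    by (simp add: mult.commute)
  also have "\<dots> = (\<Sum>i=0..n. (\<Sum>p\<in>{p\<in>P. rho p = i}. mobius P z p) * int (card {q\<in>P. rho q = n - i}))"
    unfolding fps_mult_nth char_gf_def rank_gf_def by simp
  also have "\<dots> = (\<Sum>i\<in>{0..n}. \<Sum>p\<in>{x. x \<in> Q \<and> rho x = i}. mobius P z p * int (card {q\<in>Pn. p \<le> q}))"
  proof (rule sum.cong[OF refl])
    fix i assume i: "i \<in> {0..n}"
    have e: "{x. x \<in> Q \<and> rho x = i} = {p\<in>P. rho p = i}" using i unfolding Q_def by auto
    show "(\<Sum>p\<in>{p\<in>P. rho p = i}. mobius P z p) * int (card {q\<in>P. rho q = n - i})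
        = (\<Sum>p\<in>{x. x \<in> Q \<and> rho x = i}. mobius P z p * int (card {q\<in>Pn. p \<le> q}))"
      unfolding e sum_distrib_right
    proof (rule sum.cong[OF refl])
      fix p assume p: "p \<in> {p\<in>P. rho p = i}"
      have "card {q\<in>P. rho q = n - i} = card {q\<in>P. p \<le> q \<and> rho q = rho p + (n - i)}"
        using card_shift[OF up] p by auto
      also have "{q\<in>P. p \<le> q \<and> rho q = rho p + (n - i)} = {q\<in>Pn. p \<le> q}"
        using p i unfolding Pn_def by auto
      finally show "mobius P z p * int (card {q\<in>P. rho q = n - i}) = mobius P z p * int (card {q\<in>Pn. p \<le> q})"
        by simp
    qed
  qed
  also have "\<dots> = (\<Sum>p\<in>Q. mobius P z p * int (card {q\<in>Pn. p \<le> q}))"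
    by (rule sum.group[OF fQ]) (auto simp: Q_def)
  also have "\<dots> = (\<Sum>p\<in>Q. \<Sum>q\<in>{q\<in>Pn. p \<le> q}. mobius P z p)"
    by (simp add: mult.commute)
  also have "\<dots> = (\<Sum>q\<in>Pn. \<Sum>p\<in>{p\<in>Q. p \<le> q}. mobius P z p)"
    by (rule sum.swap_restrict[OF fQ fPn])
  also have "\<dots> = (\<Sum>q\<in>Pn. if q = z then 1 else 0)"
  proof (rule sum.cong[OF refl])
    fix q assume q: "q \<in> Pn"
    have "{p\<in>Q. p \<le> q} = {p\<in>P. p \<le> q}" using q rho_le unfolding Q_def Pn_def by auto
    then show "(\<Sum>p\<in>{p\<in>Q. p \<le> q}. mobius P z p) = (if q = z then 1 else 0)"
      using mu_sum q unfolding Pn_def by auto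
  qed
  also have "\<dots> = (if z \<in> Pn then 1 else 0)" using fPn by simp
  also have "\<dots> = fps_nth (1 :: int fps) n" using zP rho_z unfolding Pn_def by auto
  finally show "fps_nth (rank_gf P rho * char_gf P rho z) n = fps_nth 1 n" .
qed

end

theorem mainTheorem4:
  fixes P :: "'a::order set" and rho :: "'a \<Rightarrow> nat" and z :: 'a
  assumes "graded P rho" and "finite_type P rho" and "upho P"
    and "is_minimum P z" and "meet_semilattice P"
  defines "P' \<equiv> {q\<in>P. \<exists>S j. S \<subseteq> atoms P z \<and> finite S \<and> is_lub P S j \<and> q \<le> j}"
  shows "finite {p\<in>P. mobius P z p \<noteq> 0}
    \<and> (\<exists>q :: int poly. char_gf P rho z = fps_of_poly q)
    \<and> rank_gf P rho * char_gf P rho z = 1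
    \<and> char_gf P rho z = fps_of_poly (\<Sum>p\<in>P'. monom (mobius P z p) (rho p))
    \<and> finite P' \<and> (\<exists>rho'. graded P' rho') \<and> meet_semilattice P'"
proof -
  have G: "gpm P rho z"
    unfolding gpm_def gpm_axioms_def gp_def using assms(1,2,4,5) by (intro conjI)
  have e: "P' = gpm.P' P z" unfolding assms(6) gpm.P'_def[OF G] by (rule refl)
  show ?thesis unfolding e
  proof (intro conjI)
    show "\<exists>q :: int poly. char_gf P rho z = fps_of_poly q" using gpm.char_poly[OF G] by blast
    show "\<exists>rho'. graded (gpm.P' P z) rho'" using gpm.P'_graded[OF G] by blast
  qed (fact gpm.mu_fin[OF G], fact gp.prod_one[OF gpm.axioms(1)[OF G] assms(3)], fact gpm.char_poly[OF G],
      fact gpm.P'_fin[OF G], fact gpm.P'_meet[OF G])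
qed


end
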